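(* Let $\mathcal{G}=(V,L)$ be a finite connected undirected graph with monitor set $M$ and non-monitor set $N=V\setminus M$, and let the measurement paths be given by Controllable Arbitrary-path Probing (CAP). Then for every non-monitor $v\in N$, the maximum identifiability index of $v$ under CAP is $\Omega_{\mathrm{CAP}}(v)=\Gamma_{\mathcal{G}^*}(v,m')$, i.e., $|C_{\mathcal{G}^*}(v,m')|$.
   Context: Failure model: a failure set is any $F\subseteq N$; a path fails iff it traverses a node of $F$. $P_F$ is the set of measurement paths traversing a node of $F$; $F_1,F_2$ distinguishable iff $P_{F_1}\ne P_{F_2}$. $S\subseteq N$ is $k$-identifiable if any two failure sets $F_1,F_2$ with $|F_1|,|F_2|\le k$ and $F_1\cap S\ne F_2\cap S$ are distinguishable (every set is trivially $0$-identifiable). A node $v$ is $k$-identifiable if $\{v\}$ is; $\Omega(v)$ is the maximum $k\in\{0,1,\dots,|N|\}$ such that $v$ is $k$-identifiable. Under CAP, the measurement paths are all walks in $\mathcal{G}$ (repeated nodes/links allowed) starting and ending at monitors (possibly the same). $\mathcal{N}(M)$ is the set of non-monitors adjacent to some monitor. $\mathcal{G}^*$ is obtained from $\mathcal{G}$ by deleting all monitors, adding a virtual node $m'$, and linking $m'$ to every node of $\mathcal{N}(M)$. For nodes $s,t$ of a graph $\mathcal{H}$, $C_{\mathcal{H}}(s,t)$ is a minimum-cardinality set of nodes (other than $s,t$) whose deletion destroys all $s$–$t$ paths; if $s,t$ are adjacent, $C_{\mathcal{H}}(s,t):=V(\mathcal{H})\setminus\{t\}$. *)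

theory Defs
  imports Main
begin

definition simple_graph :: "'a set \<Rightarrow> ('a \<Rightarrow> 'a \<Rightarrow> bool) \<Rightarrow> bool" where
  "simple_graph V E \<longleftrightarrow> finite V \<and>
     (\<forall>u w. E u w \<longrightarrow> u \<in> V \<and> w \<in> V \<and> u \<noteq> w \<and> E w u)"

definition walk :: "'a set \<Rightarrow> ('a \<Rightarrow> 'a \<Rightarrow> bool) \<Rightarrow> 'a list \<Rightarrow> bool" where
  "walk V E xs \<longleftrightarrow> xs \<noteq> [] \<and> set xs \<subseteq> V \<and> successively E xs"

definition connected_graph :: "'a set \<Rightarrow> ('a \<Rightarrow> 'a \<Rightarrow> bool) \<Rightarrow> bool" where
  "connected_graph V E \<longleftrightarrow>
     (\<forall>u\<in>V. \<forall>w\<in>V. \<exists>xs. walk V E xs \<and> hd xs = u \<and> last xs = w)"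

definition cap_paths :: "'a set \<Rightarrow> ('a \<Rightarrow> 'a \<Rightarrow> bool) \<Rightarrow> 'a set \<Rightarrow> 'a list set" where
  "cap_paths V E M = {xs. walk V E xs \<and> hd xs \<in> M \<and> last xs \<in> M}"

definition paths_hit :: "'a list set \<Rightarrow> 'a set \<Rightarrow> 'a list set" where
  "paths_hit P F = {p \<in> P. set p \<inter> F \<noteq> {}}"

definition distinguishable :: "'a list set \<Rightarrow> 'a set \<Rightarrow> 'a set \<Rightarrow> bool" where
  "distinguishable P F1 F2 \<longleftrightarrow> paths_hit P F1 \<noteq> paths_hit P F2"

definition k_identifiable :: "'a list set \<Rightarrow> 'a set \<Rightarrow> 'a set \<Rightarrow> nat \<Rightarrow> bool" where
  "k_identifiable P N S k \<longleftrightarrow>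
     (\<forall>F1 F2. F1 \<subseteq> N \<and> F2 \<subseteq> N \<and> card F1 \<le> k \<and> card F2 \<le> k \<and> F1 \<inter> S \<noteq> F2 \<inter> S
        \<longrightarrow> distinguishable P F1 F2)"

definition Omega :: "'a list set \<Rightarrow> 'a set \<Rightarrow> 'a \<Rightarrow> nat" where
  "Omega P N v = (GREATEST k. k \<le> card N \<and> k_identifiable P N {v} k)"

definition nbr_monitors :: "'a set \<Rightarrow> ('a \<Rightarrow> 'a \<Rightarrow> bool) \<Rightarrow> 'a set \<Rightarrow> 'a set" where
  "nbr_monitors V E M = {u \<in> V - M. \<exists>m\<in>M. E u m}"

text \<open>The graph G*: original non-monitors are Some u, the virtual node m' is None.\<close>

definition star_vertices :: "'a set \<Rightarrow> 'a set \<Rightarrow> 'a option set" where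
  "star_vertices V M = Some ` (V - M) \<union> {None}"

fun star_edges :: "'a set \<Rightarrow> ('a \<Rightarrow> 'a \<Rightarrow> bool) \<Rightarrow> 'a set \<Rightarrow> 'a option \<Rightarrow> 'a option \<Rightarrow> bool" where
  "star_edges V E M (Some a) (Some b) = (a \<in> V - M \<and> b \<in> V - M \<and> E a b)"
| "star_edges V E M None (Some b) = (b \<in> nbr_monitors V E M)"
| "star_edges V E M (Some a) None = (a \<in> nbr_monitors V E M)"
| "star_edges V E M None None = False"

definition vertex_cut :: "'b set \<Rightarrow> ('b \<Rightarrow> 'b \<Rightarrow> bool) \<Rightarrow> 'b set \<Rightarrow> 'b \<Rightarrow> 'b \<Rightarrow> bool" where
  "vertex_cut H EH X s t \<longleftrightarrow> X \<subseteq> H - {s, t} \<and>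
     \<not> (\<exists>xs. walk (H - X) EH xs \<and> hd xs = s \<and> last xs = t)"

text \<open>Gamma_H(s,t) = |C_H(s,t)|; for adjacent s,t, C_H(s,t) = V(H) - {t}.\<close>

definition Gamma :: "'b set \<Rightarrow> ('b \<Rightarrow> 'b \<Rightarrow> bool) \<Rightarrow> 'b \<Rightarrow> 'b \<Rightarrow> nat" where
  "Gamma H EH s t = (if EH s t then card (H - {t})
                     else (LEAST k. \<exists>X. vertex_cut H EH X s t \<and> card X = k))"

end

theory Submission
  imports Defs
begin

lemma cross:
  "xs \<noteq> [] \<Longrightarrow> \<not> P (hd xs) \<Longrightarrow> P (last xs) \<Longrightarrow>
   \<exists>ys a b zs. xs = ys @ a # b # zs \<and> \<not> P a \<and> P b"
proof (induction xs)
  case Nil then show ?case by simp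
next
  case (Cons x xs)
  show ?case
  proof (cases "xs = []")
    case True then show ?thesis using Cons by simp
  next
    case False
    show ?thesis
    proof (cases "P (hd xs)")
      case True
      then have "x # xs = [] @ x # hd xs # tl xs" using False by simp
      then show ?thesis using True Cons.prems by fastforce
    next
      case nP: False
      from Cons.IH[OF False nP] Cons.prems False obtain ys a b zs where
        "xs = ys @ a # b # zs" "\<not> P a" "P b" by auto
      then have "x # xs = (x # ys) @ a # b # zs" by simp
      then show ?thesis using \<open>\<not> P a\<close> \<open>P b\<close> by blast
    qed
  qed
qed

lemma g_to_star:
  assumes w: "walk V E xs" and h: "hd xs \<in> V - M" and l: "last xs \<in> M"
    and av: "set xs \<inter> X = {}"
  shows "\<exists>ws. walk (star_vertices V M - Some ` X) (star_edges V E M) ws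
              \<and> hd ws = Some (hd xs) \<and> last ws = None"
proof -
  have "\<exists>x\<in>set xs. x \<in> M" using l w unfolding walk_def by auto
  then obtain ys m zs where xs: "xs = ys @ m # zs" "m \<in> M" "\<forall>y\<in>set ys. y \<notin> M"
    using split_list_first_prop[of xs "\<lambda>x. x \<in> M"] by blast
  have yne: "ys \<noteq> []" using h xs by auto
  have sV: "set xs \<subseteq> V" and sE: "successively E xs" using w unfolding walk_def by auto
  have s1: "successively E ys" and e1: "E (last ys) m"
    using sE yne unfolding xs(1) by (auto simp: successively_append_iff successively_Cons)
  have ysN: "set ys \<subseteq> V - M" using sV xs by auto
  have "successively (star_edges V E M) (map Some ys)"
    unfolding successively_map
    by (rule successively_mono[OF s1]) (use ysN in auto)
  moreover have "star_edges V E M (last (map Some ys)) None"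
  proof -
    have "last ys \<in> set ys" using yne by simp
    then have "last ys \<in> V - M" using ysN by blast
    then show ?thesis using e1 yne xs(2) by (auto simp: last_map nbr_monitors_def)
  qed
  ultimately have "successively (star_edges V E M) (map Some ys @ [None])"
    using yne by (simp add: successively_append_iff)
  moreover have "set (map Some ys @ [None]) \<subseteq> star_vertices V M - Some ` X"
    using ysN av xs(1) by (auto simp: star_vertices_def)
  ultimately show ?thesis using yne xs(1)
    by (intro exI[of _ "map Some ys @ [None]"]) (auto simp: walk_def hd_map)
qed

lemma star_to_g:
  assumes MV: "M \<subseteq> V" and FN: "F \<subseteq> V - M"
    and w: "walk (star_vertices V M - Some ` F) (star_edges V E M) ws"
    and h: "hd ws = Some v" and l: "last ws = None"
  shows "\<exists>xs. walk V E xs \<and> hd xs = v \<and> last xs \<in> M \<and> set xs \<inter> F = {}"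
proof -
  have "\<exists>x\<in>set ws. x = None" using l w unfolding walk_def by (metis last_in_set)
  then obtain ys zs where ws: "ws = ys @ None # zs" "\<forall>y\<in>set ys. y \<noteq> None"
    using split_list_first_prop[of ws "\<lambda>x. x = None"] by blast
  have yne: "ys \<noteq> []" using h ws by auto
  define us where "us = map the ys"
  have "(\<forall>y\<in>set ys. y \<noteq> None) \<Longrightarrow> map Some (map the ys) = ys" by (induct ys) auto
  then have ys: "ys = map Some us" using ws us_def by simp
  have une: "us \<noteq> []" using yne ys by auto
  have sV: "set ws \<subseteq> star_vertices V M - Some ` F" and sE: "successively (star_edges V E M) ws"
    using w unfolding walk_def by auto
  have s1: "successively (star_edges V E M) ys" and e1: "star_edges V E M (last ys) None"
    using sE yne unfolding ws(1) by (auto simp: successively_append_iff successively_Cons)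
  have usN: "set us \<subseteq> V - M" "set us \<inter> F = {}"
    using sV unfolding ws(1) ys by (auto simp: star_vertices_def)
  have s2: "successively E us" using s1 unfolding ys successively_map
    by (rule successively_mono) simp
  have "last us \<in> nbr_monitors V E M" using e1 une unfolding ys by (simp add: last_map)
  then obtain m where m: "m \<in> M" "E (last us) m" unfolding nbr_monitors_def by blast
  have "walk V E (us @ [m])" using s2 m une usN MV
    by (auto simp: walk_def successively_append_iff)
  moreover have "hd (us @ [m]) = v" using h une unfolding ws(1) ys by (simp add: hd_map)
  ultimately show ?thesis using m usN MV FN by (intro exI[of _ "us @ [m]"]) auto
qed

lemma crossing_contra:
  assumes sym: "\<And>a b. E a b \<Longrightarrow> E b a" and MV: "M \<subseteq> V"
    and F1N: "F1 \<subseteq> V - M" and F2N: "F2 \<subseteq> V - M" and vF1: "v \<in> F1" and vF2: "v \<notin> F2"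
    and eq: "paths_hit (cap_paths V E M) F1 = paths_hit (cap_paths V E M) F2"
    and w: "walk V E xs" and h: "hd xs = v" and l: "last xs \<in> M"
    and av: "set xs \<inter> (F1 - {v}) = {}"
  shows False
proof -
  let ?P = "cap_paths V E M"
  define R where "R = {u. \<exists>p \<in> ?P. u \<in> set p \<and> set p \<inter> F2 = {}}"
  have avoid: "set p \<inter> F1 = {}" if "p \<in> ?P" "set p \<inter> F2 = {}" for p
    using that eq unfolding paths_hit_def by blast
  have hit: "set p \<inter> F2 \<noteq> {}" if "p \<in> ?P" "set p \<inter> F1 \<noteq> {}" for p
    using that eq unfolding paths_hit_def by blast
  have xne: "xs \<noteq> []" and sV: "set xs \<subseteq> V" and sE: "successively E xs"
    using w unfolding walk_def by auto
  have "last xs \<in> R"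
    unfolding R_def
    by (rule CollectI, rule bexI[of _ "[last xs]"]) (use l F2N MV in \<open>auto simp: cap_paths_def walk_def\<close>)
  moreover have "hd xs \<notin> R"
    using hit vF1 unfolding R_def h by blast
  ultimately obtain ys a b zs where xs: "xs = ys @ a # b # zs" "a \<notin> R" "b \<in> R"
    using cross[of xs "\<lambda>x. x \<in> R"] xne by blast
  have eab: "E a b" using sE unfolding xs(1) by (auto simp: successively_append_iff successively_Cons)
  have aV: "a \<in> V" using sV xs(1) by auto
  have axs: "a \<in> set xs" using xs(1) by auto
  obtain p where p: "p \<in> ?P" "b \<in> set p" "set p \<inter> F2 = {}" using xs(3) unfolding R_def by blast
  obtain ps qs where pq: "p = ps @ b # qs" using split_list[OF p(2)] by blast
  define p' where "p' = ps @ b # a # b # qs"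
  have pw: "walk V E p" "hd p \<in> M" "last p \<in> M" using p(1) unfolding cap_paths_def by auto
  have "successively E p'"
    using pw(1) eab sym[OF eab] unfolding p'_def walk_def pq
    by (auto simp: successively_append_iff successively_Cons)
  moreover have "set p' = insert a (set p)" unfolding p'_def pq by auto
  moreover have "hd p' = hd p" "last p' = last p" unfolding p'_def pq
    by (cases ps; simp) (cases qs; simp)
  ultimately have p'P: "p' \<in> ?P" "set p' = insert a (set p)"
    using pw aV unfolding cap_paths_def walk_def p'_def by auto
  have aF2: "a \<in> F2"
  proof (rule ccontr)
    assume "a \<notin> F2"
    then have "set p' \<inter> F2 = {}" "a \<in> set p'" using p'P p(3) by auto
    then have "a \<in> R" unfolding R_def using p'P by blast
    then show False using xs(2) by simp
  qed
  then have "set p' \<inter> F1 \<noteq> {}"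
    using eq p'P unfolding paths_hit_def by blast
  moreover have "set p \<inter> F1 = {}" using avoid p by blast
  ultimately have "a \<in> F1" using p'P by auto
  moreover have "a \<noteq> v" using aF2 vF2 by auto
  ultimately show False using av axs by auto
qed


theorem theorem4:
  fixes V M :: "'a set" and E :: "'a \<Rightarrow> 'a \<Rightarrow> bool" and v :: 'a
  assumes "simple_graph V E"
    and "connected_graph V E"
    and "M \<subseteq> V"
    and "v \<in> V - M"
  shows "Omega (cap_paths V E M) (V - M) v
           = Gamma (star_vertices V M) (star_edges V E M) (Some v) None"
proof -
  note sg = assms(1) and MV = assms(3) and vN = assms(4)
  let ?P = "cap_paths V E M" and ?N = "V - M" and ?H = "star_vertices V M"
    and ?EH = "star_edges V E M"
  have finV: "finite V" and sym: "\<And>a b. E a b \<Longrightarrow> E b a" and irr: "\<And>a. \<not> E a a"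
    using sg unfolding simple_graph_def by blast+
  have finN: "finite ?N" using finV by simp
  have mono: "k_identifiable ?P ?N S j" if "j \<le> k" "k_identifiable ?P ?N S k" for S j k
    using that unfolding k_identifiable_def by (meson order_trans)
  have dsym: "distinguishable ?P F1 F2 \<longleftrightarrow> distinguishable ?P F2 F1" for F1 F2
    unfolding distinguishable_def by auto
  have HN: "?H - {None} = Some ` ?N" unfolding star_vertices_def by auto
  have cardH: "card (?H - {None}) = card ?N" unfolding HN by (simp add: card_image)
  show ?thesis
  proof (cases "?EH (Some v) None")
    case True
    then have "v \<in> nbr_monitors V E M" by simp
    then obtain m where m: "m \<in> M" "E v m" unfolding nbr_monitors_def by blast
    have pm: "[m, v, m] \<in> ?P" using m MV vN sym[OF m(2)]
      by (auto simp: cap_paths_def walk_def)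
    have ident: "k_identifiable ?P ?N {v} k" for k
      unfolding k_identifiable_def
    proof (intro allI impI)
      fix F1 F2 assume a: "F1 \<subseteq> ?N \<and> F2 \<subseteq> ?N \<and> card F1 \<le> k \<and> card F2 \<le> k \<and> F1 \<inter> {v} \<noteq> F2 \<inter> {v}"
      have "v \<in> F1 \<and> v \<notin> F2 \<or> v \<in> F2 \<and> v \<notin> F1" using a by auto
      show "distinguishable ?P F1 F2"
      proof -
        have hs: "[m, v, m] \<in> paths_hit ?P F \<longleftrightarrow> v \<in> F" if "F \<subseteq> ?N" for F
          using that m(1) pm unfolding paths_hit_def by auto
        show ?thesis unfolding distinguishable_def
          using hs[of F1] hs[of F2] a \<open>v \<in> F1 \<and> v \<notin> F2 \<or> v \<in> F2 \<and> v \<notin> F1\<close> by metis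
      qed
    qed
    have "Omega ?P ?N v = card ?N"
      unfolding Omega_def by (rule Greatest_equality) (use ident in auto)
    then show ?thesis using True cardH by (simp add: Gamma_def)
  next
    case False
    define c where "c = (LEAST k. \<exists>X. vertex_cut ?H ?EH X (Some v) None \<and> card X = k)"
    have G: "Gamma ?H ?EH (Some v) None = c" using False unfolding Gamma_def c_def by simp
    have "vertex_cut ?H ?EH (?H - {Some v, None}) (Some v) None"
      unfolding vertex_cut_def
    proof (intro conjI notI)
      assume "\<exists>xs. walk (?H - (?H - {Some v, None})) ?EH xs \<and> hd xs = Some v \<and> last xs = None"
      then obtain xs where xs: "walk (?H - (?H - {Some v, None})) ?EH xs" "hd xs = Some v" "last xs = None"
        by blast
      have xne: "xs \<noteq> []" using xs(1) unfolding walk_def by simp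
      have "\<not> hd xs = None" using xs(2) by simp
      from cross[of xs "\<lambda>x. x = None", OF xne this xs(3)]
      obtain ys a b zs where c: "xs = ys @ a # b # zs" "a \<noteq> None" "b = None" by blast
      have "set xs \<subseteq> {Some v, None}" "successively ?EH xs" using xs(1) unfolding walk_def by auto
      then have "a = Some v" "?EH a b" using c by (auto simp: successively_append_iff successively_Cons)
      then show False using False c by simp
    qed auto
    then have "\<exists>k X. vertex_cut ?H ?EH X (Some v) None \<and> card X = k" by blast
    then have "\<exists>X. vertex_cut ?H ?EH X (Some v) None \<and> card X = c"
      unfolding c_def by (rule LeastI_ex[where P="\<lambda>k. \<exists>X. vertex_cut ?H ?EH X (Some v) None \<and> card X = k"])
    then obtain X0 where X0: "vertex_cut ?H ?EH X0 (Some v) None" "card X0 = c" by blast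
    define X where "X = {u. Some u \<in> X0}"
    have X0sub: "X0 \<subseteq> ?H - {Some v, None}" using X0(1) unfolding vertex_cut_def by blast
    have X0X: "X0 = Some ` X" unfolding X_def using X0sub by (auto simp: star_vertices_def)
    have XN: "X \<subseteq> ?N - {v}" using X0sub unfolding X0X star_vertices_def by auto
    have cardX: "card X = c" using X0(2) unfolding X0X by (simp add: card_image)
    have finX: "finite X" using XN finN finite_subset by blast
    have "card X \<le> card ?N" by (rule card_mono[OF finN]) (use XN in blast)
    then have cleN: "c \<le> card ?N" using cardX by simp
    have notc1: "\<not> k_identifiable ?P ?N {v} (Suc c)"
    proof
      assume ki: "k_identifiable ?P ?N {v} (Suc c)"
      have "paths_hit ?P (insert v X) = paths_hit ?P X"
      proof -
        have "set p \<inter> X \<noteq> {}" if pP: "p \<in> ?P" and vp: "v \<in> set p" for p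
        proof
          assume av: "set p \<inter> X = {}"
          obtain ys zs where p: "p = ys @ v # zs" using split_list[OF vp] by blast
          have pw: "walk V E p" "last p \<in> M" using pP unfolding cap_paths_def by auto
          have w2: "walk V E (v # zs)" using pw(1) unfolding p walk_def
            by (auto simp: successively_append_iff)
          have l2: "last (v # zs) \<in> M" using pw(2) unfolding p by (cases zs) auto
          obtain ws where "walk (?H - Some ` X) ?EH ws" "hd ws = Some v" "last ws = None"
            using g_to_star[OF w2 _ l2, of X] vN av p by auto
          then show False using X0(1) unfolding vertex_cut_def X0X by blast
        qed
        then show ?thesis unfolding paths_hit_def by blast
      qed
      moreover have "v \<notin> X" using XN by blast
      then have "card (insert v X) = Suc c" using finX cardX by simp
      moreover have "insert v X \<subseteq> ?N" "X \<subseteq> ?N" "card X \<le> Suc c"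
        "insert v X \<inter> {v} \<noteq> X \<inter> {v}" using XN vN cardX by auto
      moreover have "card (insert v X) \<le> Suc c" using \<open>card (insert v X) = Suc c\<close> by simp
      ultimately have "distinguishable ?P (insert v X) X"
        using ki[unfolded k_identifiable_def, rule_format, of "insert v X" X] by blast
      then show False using \<open>paths_hit ?P (insert v X) = paths_hit ?P X\<close>
        unfolding distinguishable_def by simp
    qed
    have main: "distinguishable ?P F1 F2"
      if F: "F1 \<subseteq> ?N" "F2 \<subseteq> ?N" "card F1 \<le> c" "v \<in> F1" "v \<notin> F2" for F1 F2
    proof (rule ccontr)
      assume "\<not> distinguishable ?P F1 F2"
      then have eq: "paths_hit ?P F1 = paths_hit ?P F2" unfolding distinguishable_def by simp
      have finF1: "finite F1" using F(1) finN finite_subset by blast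
      have cut: "vertex_cut ?H ?EH (Some ` (F1 - {v})) (Some v) None"
        unfolding vertex_cut_def
      proof (intro conjI notI)
        show "Some ` (F1 - {v}) \<subseteq> ?H - {Some v, None}" using F(1) by (auto simp: star_vertices_def)
      next
        assume "\<exists>xs. walk (?H - Some ` (F1 - {v})) ?EH xs \<and> hd xs = Some v \<and> last xs = None"
        then obtain ws where ws: "walk (?H - Some ` (F1 - {v})) ?EH ws" "hd ws = Some v" "last ws = None"
          by blast
        obtain xs where "walk V E xs" "hd xs = v" "last xs \<in> M" "set xs \<inter> (F1 - {v}) = {}"
          using star_to_g[OF MV _ ws] F(1) by blast
        then show False using crossing_contra[OF sym MV F(1) F(2) F(4) F(5) eq] by blast
      qed
      have "card (F1 - {v}) < card F1" by (rule card_Diff1_less[OF finF1 F(4)])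
      then have "card (Some ` (F1 - {v})) < c" using F(3) by (simp add: card_image)
      then have "\<not> (\<exists>X. vertex_cut ?H ?EH X (Some v) None \<and> card X = card (Some ` (F1 - {v})))"
        unfolding c_def by (rule not_less_Least)
      then show False using cut by blast
    qed
    have identc: "k_identifiable ?P ?N {v} c"
      unfolding k_identifiable_def
    proof (intro allI impI)
      fix F1 F2 assume a: "F1 \<subseteq> ?N \<and> F2 \<subseteq> ?N \<and> card F1 \<le> c \<and> card F2 \<le> c \<and> F1 \<inter> {v} \<noteq> F2 \<inter> {v}"
      have "v \<in> F1 \<and> v \<notin> F2 \<or> v \<in> F2 \<and> v \<notin> F1" using a by auto
      then show "distinguishable ?P F1 F2" using main a dsym by blast
    qed
    have "Omega ?P ?N v = c"
      unfolding Omega_def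
    proof (rule Greatest_equality)
      show "c \<le> card ?N \<and> k_identifiable ?P ?N {v} c" using cleN identc by simp
    next
      fix y assume "y \<le> card ?N \<and> k_identifiable ?P ?N {v} y"
      then show "y \<le> c" using mono[of "Suc c" y] notc1 by (meson not_less_eq_eq)
    qed
    then show ?thesis using G by simp
  qed
qed

end
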